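(* If all arms have the same prior mean reward, $\mathbb E[\mu_1]=\mathbb E[\mu_2]=\dots=\mathbb E[\mu_K]$, then Thompson sampling (run from the first round) is BIC.
   Context: Incentivized exploration model: $K$ arms; mean rewards $\mu_1,\dots,\mu_K\in[0,1]$ drawn independently, $\mu_i\sim\mathcal P_i$ with known priors. Rewards are Bernoulli: given the means, each arm $i$ has an i.i.d. sequence of $\{0,1\}$ samples with mean $\mu_i$, the $n$-th choice of arm $i$ reveals its $n$-th sample. In each round $t$ the algorithm recommends $A_t$, the agent chooses $A'_t$, and the reward is observed by the algorithm. With $\mathcal E_{t-1}=\{A'_s=A_s\ \forall s<t\}$, the algorithm is BIC if for all $t$ and all arms $i,j$ with $\Pr[A_t=i]>0$, $\mathbb E[\mu_i-\mu_j\mid A_t=i,\mathcal E_{t-1}]\geq0$. $A^*=\min(\arg\max_j\mu_j)$; $\mathcal F_t$ is the $\sigma$-algebra of chosen arms and rewards before round $t$. Thompson sampling recommends in round $t$ an arm $A_t$ with $\Pr[A_t=i\mid\mathcal F_t]=\Pr[A^*=i\mid\mathcal F_t]$ (a posterior sample of $A^*$). *)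

theory Defs
  imports "HOL-Probability.Probability"
begin

text \<open>Arms are 0,...,K-1. A vector of mean rewards is mu :: nat => real
  (only the values on arms below K matter).\<close>

definition best_arm :: "nat \<Rightarrow> (nat \<Rightarrow> real) \<Rightarrow> nat" where
  "best_arm K mu = (LEAST i. i < K \<and> (\<forall>j<K. mu j \<le> mu i))"

definition prior :: "nat \<Rightarrow> (nat \<Rightarrow> real measure) \<Rightarrow> (nat \<Rightarrow> real) measure" where
  "prior K P = PiM {..<K} P"

text \<open>A history is the list of (chosen arm, observed Bernoulli reward) pairs.
  Probability of observing reward r when pulling arm a with means mu.\<close>
definition reward_lik :: "(nat \<Rightarrow> real) \<Rightarrow> nat \<times> bool \<Rightarrow> real" where
  "reward_lik mu ar = (if snd ar then mu (fst ar) else 1 - mu (fst ar))"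

definition lik :: "(nat \<times> bool) list \<Rightarrow> (nat \<Rightarrow> real) \<Rightarrow> real" where
  "lik h mu = (\<Prod>ar\<leftarrow>h. reward_lik mu ar)"

definition posterior_best :: "nat \<Rightarrow> (nat \<Rightarrow> real measure) \<Rightarrow> (nat \<times> bool) list \<Rightarrow> nat \<Rightarrow> real" where
  "posterior_best K P h a =
     (\<integral>mu. (if best_arm K mu = a then lik h mu else 0) \<partial>prior K P) /
     (\<integral>mu. lik h mu \<partial>prior K P)"

text \<open>Probability, given the true means mu, that Thompson sampling (followed by
  the agents) produces exactly history h: in each round s the arm is drawn from
  the posterior of A* given the previous history, then the reward is Bernoulli.\<close>
definition ts_hist_prob :: "nat \<Rightarrow> (nat \<Rightarrow> real measure) \<Rightarrow> (nat \<Rightarrow> real) \<Rightarrow> (nat \<times> bool) list \<Rightarrow> real" where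
  "ts_hist_prob K P mu h =
     (\<Prod>s<length h. posterior_best K P (take s h) (fst (h ! s)) * reward_lik mu (h ! s))"

definition histories :: "nat \<Rightarrow> nat \<Rightarrow> (nat \<times> bool) list set" where
  "histories K n = {h. length h = n \<and> (\<forall>ar\<in>set h. fst ar < K)}"

text \<open>Pr[A_t = i | means mu] for round t = n+1 (history of length n).\<close>
definition ts_rec_prob :: "nat \<Rightarrow> (nat \<Rightarrow> real measure) \<Rightarrow> (nat \<Rightarrow> real) \<Rightarrow> nat \<Rightarrow> nat \<Rightarrow> real" where
  "ts_rec_prob K P mu n i =
     (\<Sum>h\<in>histories K n. ts_hist_prob K P mu h * posterior_best K P h i)"

text \<open>Pr[A_t = i] for round t = n+1.\<close>
definition rec_prob :: "nat \<Rightarrow> (nat \<Rightarrow> real measure) \<Rightarrow> nat \<Rightarrow> nat \<Rightarrow> real" where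
  "rec_prob K P n i = (\<integral>mu. ts_rec_prob K P mu n i \<partial>prior K P)"

text \<open>E[mu_i - mu_j | A_t = i] for round t = n+1 (elementary conditional expectation).\<close>
definition cond_gain :: "nat \<Rightarrow> (nat \<Rightarrow> real measure) \<Rightarrow> nat \<Rightarrow> nat \<Rightarrow> nat \<Rightarrow> real" where
  "cond_gain K P n i j =
     (\<integral>mu. (mu i - mu j) * ts_rec_prob K P mu n i \<partial>prior K P) / rec_prob K P n i"

text \<open>Thompson sampling is BIC (the agents having followed all earlier recommendations).\<close>
definition TS_BIC :: "nat \<Rightarrow> (nat \<Rightarrow> real measure) \<Rightarrow> bool" where
  "TS_BIC K P \<longleftrightarrow>
     (\<forall>n i j. i < K \<longrightarrow> j < K \<longrightarrow> rec_prob K P n i > 0 \<longrightarrow> cond_gain K P n i j \<ge> 0)"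

end

theory Submission
  imports Defs
begin

definition box :: "nat \<Rightarrow> (nat \<Rightarrow> real) \<Rightarrow> bool" where
  "box K mu \<longleftrightarrow> (\<forall>k<K. 0 \<le> mu k \<and> mu k \<le> 1)"

definition arms_ok :: "nat \<Rightarrow> (nat \<times> bool) list \<Rightarrow> bool" where
  "arms_ok K h \<longleftrightarrow> (\<forall>ar\<in>set h. fst ar < K)"


lemma lik_cong: "(\<And>ar. ar \<in> set h \<Longrightarrow> mu (fst ar) = nu (fst ar)) \<Longrightarrow> lik h mu = lik h nu"
  by (induction h) (auto simp: lik_def reward_lik_def)

lemma lik_Cons: "lik (x # h) mu = reward_lik mu x * lik h mu"
  by (simp add: lik_def)

lemma lik_Nil[simp]: "lik [] mu = 1"
  by (simp add: lik_def)

lemma lik_split: "lik h mu = lik (filter (\<lambda>ar. fst ar = a) h) mu * lik (filter (\<lambda>ar. fst ar \<noteq> a) h) mu"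
  by (induction h) (auto simp: lik_Cons)

lemma lik_snoc_T: "lik (h @ [(a, True)]) mu = lik h mu * mu a"
  by (simp add: lik_def reward_lik_def)

lemma lik_snoc_F: "lik (h @ [(a, False)]) mu = lik h mu * (1 - mu a)"
  by (simp add: lik_def reward_lik_def)

lemma lik_bounds: "box K mu \<Longrightarrow> arms_ok K h \<Longrightarrow> 0 \<le> lik h mu \<and> lik h mu \<le> 1"
proof (induction h)
  case Nil then show ?case by simp
next
  case (Cons x h)
  then have x: "fst x < K" and h: "arms_ok K h" by (auto simp: arms_ok_def)
  have r: "0 \<le> reward_lik mu x \<and> reward_lik mu x \<le> 1"
    using Cons.prems(1) x by (auto simp: box_def reward_lik_def)
  from Cons.IH[OF Cons.prems(1) h] r show ?case
    by (auto simp: lik_Cons intro: mult_le_one)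
qed

lemma arms_ok_filter: "arms_ok K h \<Longrightarrow> arms_ok K (filter Q h)"
  by (auto simp: arms_ok_def)

lemma box_upd: "box K mu \<Longrightarrow> 0 \<le> y \<Longrightarrow> y \<le> 1 \<Longrightarrow> box K (mu(a := y))"
  by (auto simp: box_def)

lemma box_const: "0 \<le> y \<Longrightarrow> y \<le> 1 \<Longrightarrow> box K (\<lambda>_. y)"
  by (auto simp: box_def)

lemma meas_lik_const: "(\<lambda>y. lik h (\<lambda>_. y)) \<in> borel_measurable borel"
proof (induction h)
  case Nil then show ?case by simp
next
  case (Cons x h)
  then show ?case unfolding lik_Cons reward_lik_def by measurable
qed
lemma alg:
  fixes z1 z0 B1 B0 G1 G0 :: real
  assumes "0 \<le> B1" "B1 \<le> z1" "0 \<le> B0" "B0 \<le> z0" "\<bar>G1\<bar> \<le> z1" "\<bar>G0\<bar> \<le> z0" "0 < z1 + z0"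
    and cov: "0 \<le> (B1 * (z1 + z0) - (B1 + B0) * z1) * (G1 * (z1 + z0) - (G1 + G0) * z1)"
  shows "(B1 + B0) * (G1 + G0) / (z1 + z0) \<le> B1 * G1 / z1 + B0 * G0 / z0"
proof (cases "z1 = 0")
  case True
  then have "B1 = 0" "G1 = 0" using assms by auto
  then show ?thesis using True by simp
next
  case z1: False
  show ?thesis
  proof (cases "z0 = 0")
    case True
    then have "B0 = 0" "G0 = 0" using assms by auto
    then show ?thesis using True by simp
  next
    case False
    then have p1: "0 < z1" and p0: "0 < z0" using z1 assms by auto
    have e: "B1 * (z1 + z0) - (B1 + B0) * z1 = B1 * z0 - B0 * z1"
            "G1 * (z1 + z0) - (G1 + G0) * z1 = G1 * z0 - G0 * z1" by (simp_all add: algebra_simps)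
    have d: "B1 * G1 / z1 + B0 * G0 / z0 - (B1 + B0) * (G1 + G0) / (z1 + z0)
       = (B1 * z0 - B0 * z1) * (G1 * z0 - G0 * z1) / (z1 * z0 * (z1 + z0))"
      using p1 p0 by (simp add: field_simps)
    have "0 \<le> (B1 * z0 - B0 * z1) * (G1 * z0 - G0 * z1) / (z1 * z0 * (z1 + z0))"
      using cov e p1 p0 by simp
    then show ?thesis using d by simp
  qed
qed

lemma best_char:
  assumes "i < K" "\<forall>k<K. mu k \<le> mu i" "\<forall>m<i. \<not> (\<forall>k<K. mu k \<le> mu m)"
  shows "best_arm K mu = i"
  unfolding best_arm_def
proof (rule Least_equality)
  show "i < K \<and> (\<forall>k<K. mu k \<le> mu i)" using assms by auto
  fix m assume "m < K \<and> (\<forall>k<K. mu k \<le> mu m)"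
  then show "i \<le> m" using assms(3) leI by blast
qed

lemma best_ex: "0 < K \<Longrightarrow> \<exists>i. i < K \<and> (\<forall>k<K. (mu::nat\<Rightarrow>real) k \<le> mu i)"
proof -
  assume K: "0 < K"
  have fin: "finite (mu ` {..<K})" "mu ` {..<K} \<noteq> {}" using K by auto
  obtain i where "i < K" "mu i = Max (mu ` {..<K})"
    using Max_in[OF fin] by auto
  moreover have "\<forall>k<K. mu k \<le> Max (mu ` {..<K})" using fin by auto
  ultimately show ?thesis by auto
qed

lemma best_props:
  assumes "0 < K"
  shows "best_arm K mu < K" "\<forall>k<K. mu k \<le> mu (best_arm K mu)"
    "\<forall>m<best_arm K mu. \<not> (\<forall>k<K. mu k \<le> mu m)"
proof -
  have "best_arm K mu < K \<and> (\<forall>k<K. mu k \<le> mu (best_arm K mu))"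
    unfolding best_arm_def by (rule LeastI_ex) (rule best_ex[OF assms])
  then show "best_arm K mu < K" "\<forall>k<K. mu k \<le> mu (best_arm K mu)" by auto
  show "\<forall>m<best_arm K mu. \<not> (\<forall>k<K. mu k \<le> mu m)"
  proof (intro allI impI)
    fix m assume m: "m < best_arm K mu"
    have "\<not> (m < K \<and> (\<forall>k<K. mu k \<le> mu m))"
      using m unfolding best_arm_def by (rule not_less_Least)
    moreover have "m < K" using m \<open>best_arm K mu < K\<close> by simp
    ultimately show "\<not> (\<forall>k<K. mu k \<le> mu m)" by simp
  qed
qed

lemma best_mono_own:
  assumes i: "i < K" and yy: "y \<le> y'" and b: "best_arm K (mu(i := y)) = i"
  shows "best_arm K (mu(i := y')) = i"
proof -
  have K: "0 < K" using i by simp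
  note p = best_props[OF K, of "mu(i := y)", unfolded b]
  show ?thesis
  proof (rule best_char[OF i])
    show "\<forall>k<K. (mu(i := y')) k \<le> (mu(i := y')) i"
      using p(2) yy by auto
    show "\<forall>m<i. \<not> (\<forall>k<K. (mu(i := y')) k \<le> (mu(i := y')) m)"
    proof (intro allI impI notI)
      fix m assume m: "m < i" and H: "\<forall>k<K. (mu(i := y')) k \<le> (mu(i := y')) m"
      have "\<forall>k<K. (mu(i := y)) k \<le> (mu(i := y)) m"
      proof (intro allI impI)
        fix k assume k: "k < K"
        have "(mu(i := y')) k \<le> (mu(i := y')) m" using H k by auto
        moreover have "(mu(i := y')) i \<le> (mu(i := y')) m" using H i by auto
        ultimately show "(mu(i := y)) k \<le> (mu(i := y)) m"
          using m yy by (cases "k = i") auto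
      qed
      then show False using p(3) m by auto
    qed
  qed
qed

lemma best_mono_other:
  assumes i: "i < K" and ji: "j \<noteq> i" and yy: "y \<le> y'" and b: "best_arm K (mu(j := y')) = i"
  shows "best_arm K (mu(j := y)) = i"
proof -
  have K: "0 < K" using i by simp
  note p = best_props[OF K, of "mu(j := y')", unfolded b]
  show ?thesis
  proof (rule best_char[OF i])
    show "\<forall>k<K. (mu(j := y)) k \<le> (mu(j := y)) i"
    proof (intro allI impI)
      fix k assume k: "k < K"
      have "(mu(j := y')) k \<le> (mu(j := y')) i" using p(2) k by auto
      then show "(mu(j := y)) k \<le> (mu(j := y)) i" using ji yy by (cases "k = j") auto
    qed
    show "\<forall>m<i. \<not> (\<forall>k<K. (mu(j := y)) k \<le> (mu(j := y)) m)"
    proof (intro allI impI notI)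
      fix m assume m: "m < i" and H: "\<forall>k<K. (mu(j := y)) k \<le> (mu(j := y)) m"
      have "\<forall>k<K. (mu(j := y')) k \<le> (mu(j := y')) m"
      proof (intro allI impI)
        fix k assume k: "k < K"
        have "(mu(j := y)) k \<le> (mu(j := y)) m" using H k by auto
        moreover have "(mu(j := y)) i \<le> (mu(j := y)) m" using H i by auto
        moreover have "k = j \<Longrightarrow> y' \<le> mu i" using p(2) k ji by force
        ultimately show "(mu(j := y')) k \<le> (mu(j := y')) m"
        proof (cases "m = j")
          case True
          then show ?thesis using \<open>(mu(j := y)) k \<le> (mu(j := y)) m\<close> yy by (cases "k = j") auto
        next
          case False
          show ?thesis
          proof (cases "k = j")
            case True
            then have "y' \<le> mu i" using \<open>k = j \<Longrightarrow> y' \<le> mu i\<close> by blast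
            moreover have "mu i \<le> mu m" using \<open>(mu(j := y)) i \<le> (mu(j := y)) m\<close> ji False by simp
            ultimately show ?thesis using True False by simp
          next
            case kj: False
            then show ?thesis using \<open>(mu(j := y)) k \<le> (mu(j := y)) m\<close> False by simp
          qed
        qed
      qed
      then show False using p(3) m by auto
    qed
  qed
qed


locale ts =
  fixes K :: nat and P :: "nat \<Rightarrow> real measure"
  assumes prob: "\<And>i. i < K \<Longrightarrow> prob_space (P i)"
    and setsP: "\<And>i. i < K \<Longrightarrow> sets (P i) = sets borel"
    and AE01: "\<And>i. i < K \<Longrightarrow> (AE x in P i. 0 \<le> x \<and> x \<le> 1)"
begin

definition P' :: "nat \<Rightarrow> real measure" where
  "P' i = (if i < K then P i else return borel 0)"

lemma prob': "prob_space (P' i)"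
  unfolding P'_def by (auto intro: prob prob_space_return)

lemma sets': "sets (P' i) = sets borel"
  unfolding P'_def using setsP by auto

lemma prior_eq: "prior K P = PiM {..<K} P'"
  unfolding prior_def P'_def by (rule PiM_cong) auto

lemma pps: "product_prob_space P'" 
  unfolding product_prob_space_def product_prob_space_axioms_def product_sigma_finite_def
  using prob' prob_space_imp_sigma_finite by blast

lemma prob_prior: "prob_space (prior K P)"
  unfolding prior_eq by (intro prob_space_PiM prob')

lemma AE_box: "AE mu in prior K P. box K mu"
proof -
  have "AE mu in PiM {..<K} P'. \<forall>k\<in>{..<K}. 0 \<le> mu k \<and> mu k \<le> 1"
    apply (rule eventually_ball_finite, simp, rule ballI)
    apply (rule AE_PiM_component[where P="\<lambda>x. 0 \<le> x \<and> x \<le> 1"])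
      apply (rule prob')
     apply simp
    apply (simp only: P'_def if_True lessThan_iff)
    using AE01 by blast
  then show ?thesis unfolding prior_eq box_def by auto
qed

lemma meas_comp[measurable]: "k < K \<Longrightarrow> (\<lambda>mu. mu k) \<in> borel_measurable (prior K P)"
  unfolding prior_eq
  using measurable_component_singleton[of k "{..<K}" P'] 
  by (simp add: measurable_cong_sets[OF refl sets'])

lemma meas_lik[measurable]: "arms_ok K h \<Longrightarrow> lik h \<in> borel_measurable (prior K P)"
proof (induction h)
  case Nil
  then show ?case by (simp add: lik_def)
next
  case (Cons x h)
  then have "fst x < K" "arms_ok K h" by (auto simp: arms_ok_def)
  then have "(\<lambda>mu. reward_lik mu x * lik h mu) \<in> borel_measurable (prior K P)"
    using Cons.IH unfolding reward_lik_def by measurable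
  then show ?case by (simp add: lik_def)
qed

lemma meas_maxi: "(\<lambda>mu. i < K \<and> (\<forall>j\<in>{..<K}. mu j \<le> mu i)) \<in> measurable (prior K P) (count_space UNIV)"
proof (cases "i < K")
  case True
  have "Measurable.pred (prior K P) (\<lambda>mu. \<forall>j\<in>{..<K}. mu j \<le> mu i)"
  proof (rule pred_intros_finite(3))
    fix j assume "j \<in> {..<K}"
    then have [measurable]: "(\<lambda>mu. mu j) \<in> borel_measurable (prior K P)" by (simp add: meas_comp)
    have [measurable]: "(\<lambda>mu. mu i) \<in> borel_measurable (prior K P)" using True by (simp add: meas_comp)
    show "Measurable.pred (prior K P) (\<lambda>mu. mu j \<le> mu i)"
      unfolding Measurable.pred_def by (intro borel_measurable_le) measurable
  qed simp
  then show ?thesis using True by simp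
qed simp

lemma meas_best[measurable]: "(\<lambda>mu. best_arm K mu) \<in> measurable (prior K P) (count_space UNIV)"
proof -
  have "(\<lambda>mu. LEAST i. i < K \<and> (\<forall>j\<in>{..<K}. mu j \<le> mu i)) \<in> measurable (prior K P) (count_space UNIV)"
    by (rule measurable_Least) (rule meas_maxi)
  moreover have "(\<lambda>mu. best_arm K mu) = (\<lambda>mu. LEAST i. i < K \<and> (\<forall>j\<in>{..<K}. mu j \<le> mu i))"
    by (rule ext) (simp only: best_arm_def Ball_def lessThan_iff)
  ultimately show ?thesis by (simp only:)
qed

lemma int_bdd:
  fixes C :: real
  assumes "f \<in> borel_measurable (prior K P)" "\<And>mu. box K mu \<Longrightarrow> \<bar>f mu\<bar> \<le> C"
  shows "integrable (prior K P) f"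
proof -
  interpret prob_space "prior K P" by (rule prob_prior)
  show ?thesis
    by (rule integrable_const_bound[where B=C]) (use AE_box assms in auto)
qed

lemma int_lik:
  fixes C :: real
  assumes "f \<in> borel_measurable (prior K P)" "\<And>mu. box K mu \<Longrightarrow> \<bar>f mu\<bar> \<le> C"
    and h: "arms_ok K h"
  shows "integrable (prior K P) (\<lambda>mu. f mu * lik h mu)"
proof (rule int_bdd[where C=C])
  show "(\<lambda>mu. f mu * lik h mu) \<in> borel_measurable (prior K P)"
    using assms meas_lik[OF h] by measurable
  fix mu assume b: "box K mu"
  then have "0 \<le> lik h mu" "lik h mu \<le> 1" using lik_bounds[OF b h] by auto
  then have "\<bar>f mu * lik h mu\<bar> \<le> \<bar>f mu\<bar> * 1"
    by (auto simp: abs_mult intro: mult_left_le)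
  then show "\<bar>f mu * lik h mu\<bar> \<le> C" using assms(2)[OF b] by simp
qed

definition E :: "(nat \<times> bool) list \<Rightarrow> ((nat \<Rightarrow> real) \<Rightarrow> real) \<Rightarrow> real" where
  "E h f = (\<integral>mu. f mu * lik h mu \<partial>prior K P)"

lemma meas_upd:
  assumes a: "a < K"
  shows "(\<lambda>mu. mu(a := c)) \<in> measurable (prior K P) (prior K P)"
proof -
  have sp: "space (P' i) = UNIV" for i
    using sets_eq_imp_space_eq[OF sets'[of i]] by simp
  have "(\<lambda>w i. (w(a := c)) i) \<in> measurable (PiM {..<K} P') (PiM {..<K} P')"
  proof (rule measurable_PiM_single')
    fix i assume i: "i \<in> {..<K}"
    show "(\<lambda>w. (w(a := c)) i) \<in> measurable (PiM {..<K} P') (P' i)"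
    proof (cases "i = a")
      case True then show ?thesis by (simp add: sp)
    next
      case False then show ?thesis using i by simp
    qed
  next
    show "(\<lambda>w i. (w(a := c)) i) \<in> space (PiM {..<K} P') \<rightarrow> (\<Pi>\<^sub>E i\<in>{..<K}. space (P' i))"
      using a by (auto simp: space_PiM sp PiE_def extensional_def)
  qed
  then show ?thesis unfolding prior_eq fun_upd_def by simp
qed

lemma meas_P_lik: assumes "f \<in> borel_measurable borel" "a < K"
  shows "(\<lambda>y. f y * lik h (\<lambda>_. y)) \<in> borel_measurable (P a)"
proof -
  have "(\<lambda>y. f y * lik h (\<lambda>_. y)) \<in> borel_measurable borel"
    using assms meas_lik_const[of h] by measurable
  then show ?thesis using measurable_cong_sets[OF setsP[OF \<open>a < K\<close>] refl] by blast
qed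

lemma indep_split:
  fixes C :: real
  assumes a: "a < K" and h: "arms_ok K h"
    and Hm: "H \<in> borel_measurable (prior K P)" and Hb: "\<And>mu. box K mu \<Longrightarrow> \<bar>H mu\<bar> \<le> C"
    and Hinv: "\<And>mu y. H (mu(a := y)) = H mu"
    and phim: "phi \<in> borel_measurable borel" and phib: "\<And>y. 0 \<le> y \<Longrightarrow> y \<le> 1 \<Longrightarrow> \<bar>phi y\<bar> \<le> 1"
  shows "E h (\<lambda>mu. H mu * phi (mu a)) =
    (\<integral>x. H x * lik (filter (\<lambda>ar. fst ar \<noteq> a) h) x \<partial>PiM ({..<K} - {a}) P') *
    (\<integral>y. phi y * lik (filter (\<lambda>ar. fst ar = a) h) (\<lambda>_. y) \<partial>P a)"
proof -
  interpret PP: product_prob_space P' by (rule pps)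
  define I where "I = {..<K} - {a}"
  have ins: "insert a I = {..<K}" "a \<notin> I" "finite I" using a by (auto simp: I_def)
  have int: "integrable (prior K P) (\<lambda>mu. (H mu * phi (mu a)) * lik h mu)"
  proof (rule int_lik[OF _ _ h, where C=C])
    show "(\<lambda>mu. H mu * phi (mu a)) \<in> borel_measurable (prior K P)"
      using Hm phim a by measurable
    fix mu assume b: "box K mu"
    then have "\<bar>phi (mu a)\<bar> \<le> 1" using a phib by (auto simp: box_def)
    moreover have "\<bar>H mu\<bar> \<le> C" by (rule Hb[OF b])
    ultimately have "\<bar>H mu\<bar> * \<bar>phi (mu a)\<bar> \<le> C * 1"
      by (intro mult_mono) auto
    then show "\<bar>H mu * phi (mu a)\<bar> \<le> C" by (simp add: abs_mult)
  qed
  have inner: "(\<integral>y. (H (x(a:=y)) * phi ((x(a:=y)) a)) * lik h (x(a:=y)) \<partial>P' a) =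
       H x * lik (filter (\<lambda>ar. fst ar \<noteq> a) h) x * (\<integral>y. phi y * lik (filter (\<lambda>ar. fst ar = a) h) (\<lambda>_. y) \<partial>P a)" for x
  proof -
    have "(\<lambda>y. (H (x(a:=y)) * phi ((x(a:=y)) a)) * lik h (x(a:=y))) =
          (\<lambda>y. H x * lik (filter (\<lambda>ar. fst ar \<noteq> a) h) x * (phi y * lik (filter (\<lambda>ar. fst ar = a) h) (\<lambda>_. y)))"
    proof
      fix y
      have "lik h (x(a:=y)) = lik (filter (\<lambda>ar. fst ar = a) h) (x(a:=y)) * lik (filter (\<lambda>ar. fst ar \<noteq> a) h) (x(a:=y))"
        by (rule lik_split)
      also have "lik (filter (\<lambda>ar. fst ar = a) h) (x(a:=y)) = lik (filter (\<lambda>ar. fst ar = a) h) (\<lambda>_. y)"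
        by (rule lik_cong) auto
      also have "lik (filter (\<lambda>ar. fst ar \<noteq> a) h) (x(a:=y)) = lik (filter (\<lambda>ar. fst ar \<noteq> a) h) x"
        by (rule lik_cong) auto
      finally have L: "lik h (x(a:=y)) = lik (filter (\<lambda>ar. fst ar = a) h) (\<lambda>_. y) * lik (filter (\<lambda>ar. fst ar \<noteq> a) h) x" .
      show "(H (x(a:=y)) * phi ((x(a:=y)) a)) * lik h (x(a:=y)) =
          H x * lik (filter (\<lambda>ar. fst ar \<noteq> a) h) x * (phi y * lik (filter (\<lambda>ar. fst ar = a) h) (\<lambda>_. y))"
        by (subst L, subst Hinv, simp add: mult_ac)
    qed
    then show "(\<integral>y. (H (x(a:=y)) * phi ((x(a:=y)) a)) * lik h (x(a:=y)) \<partial>P' a) =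
       H x * lik (filter (\<lambda>ar. fst ar \<noteq> a) h) x * (\<integral>y. phi y * lik (filter (\<lambda>ar. fst ar = a) h) (\<lambda>_. y) \<partial>P a)"
      using a by (simp add: P'_def)
  qed
  have "E h (\<lambda>mu. H mu * phi (mu a)) = (\<integral>mu. (H mu * phi (mu a)) * lik h mu \<partial>PiM (insert a I) P')"
    unfolding E_def prior_eq ins(1) ..
  also have "\<dots> = (\<integral>x. (\<integral>y. (H (x(a:=y)) * phi ((x(a:=y)) a)) * lik h (x(a:=y)) \<partial>P' a) \<partial>PiM I P')"
    using int unfolding prior_eq ins(1)[symmetric]
    by (intro PP.product_integral_insert ins) 
  also have "\<dots> = (\<integral>x. H x * lik (filter (\<lambda>ar. fst ar \<noteq> a) h) x *
        (\<integral>y. phi y * lik (filter (\<lambda>ar. fst ar = a) h) (\<lambda>_. y) \<partial>P a) \<partial>PiM I P')"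
    by (simp only: inner)
  also have "\<dots> = (\<integral>x. H x * lik (filter (\<lambda>ar. fst ar \<noteq> a) h) x \<partial>PiM I P') *
    (\<integral>y. phi y * lik (filter (\<lambda>ar. fst ar = a) h) (\<lambda>_. y) \<partial>P a)"
    by simp
  finally show ?thesis unfolding I_def .
qed


lemma int_Pa:
  assumes a: "a < K" and hA: "arms_ok K hA" and phim: "phi \<in> borel_measurable borel"
    and phib: "\<And>y. 0 \<le> y \<Longrightarrow> y \<le> 1 \<Longrightarrow> \<bar>phi y\<bar> \<le> 1"
  shows "integrable (P a) (\<lambda>y. phi y * lik hA (\<lambda>_. y))"
proof -
  interpret prob_space "P a" by (rule prob[OF a])
  show ?thesis
  proof (rule integrable_const_bound[where B=1])
    show "(\<lambda>y. phi y * lik hA (\<lambda>_. y)) \<in> borel_measurable (P a)"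
      by (rule meas_P_lik[OF phim a])
    show "AE y in P a. norm (phi y * lik hA (\<lambda>_. y)) \<le> 1"
      using AE01[OF a]
    proof (rule eventually_mono)
      fix y :: real assume y: "0 \<le> y \<and> y \<le> 1"
      have "0 \<le> lik hA (\<lambda>_. y) \<and> lik hA (\<lambda>_. y) \<le> 1"
        using lik_bounds[OF box_const hA] y by auto
      moreover have "\<bar>phi y\<bar> \<le> 1" using phib y by auto
      ultimately have "\<bar>phi y\<bar> * \<bar>lik hA (\<lambda>_. y)\<bar> \<le> 1 * 1"
        by (intro mult_mono) auto
      then show "norm (phi y * lik hA (\<lambda>_. y)) \<le> 1" by (simp add: abs_mult)
    qed
  qed
qed

lemma E_one_nonneg: "arms_ok K h \<Longrightarrow> 0 \<le> E h (\<lambda>_. 1)"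
  unfolding E_def
proof (rule integral_nonneg_AE)
  assume h: "arms_ok K h"
  show "AE mu in prior K P. 0 \<le> 1 * lik h mu"
    using AE_box by (rule eventually_mono) (use lik_bounds h in auto)
qed

lemma cov_inc:
  fixes C :: real
  assumes a: "a < K" and h: "arms_ok K h"
    and Fm: "F \<in> borel_measurable (prior K P)" and Fb: "\<And>mu. box K mu \<Longrightarrow> \<bar>F mu\<bar> \<le> C"
    and Fmono: "\<And>mu y y'. y \<le> y' \<Longrightarrow> F (mu(a:=y)) \<le> F (mu(a:=y'))"
  shows "E h F * E h (\<lambda>mu. mu a) \<le> E h (\<lambda>mu. F mu * mu a) * E h (\<lambda>_. 1)"
proof -
  define hA where "hA = filter (\<lambda>ar. fst ar = a) h"
  define hB where "hB = filter (\<lambda>ar. fst ar \<noteq> a) h"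
  define l where "l = (\<integral>y. lik hA (\<lambda>_. y) \<partial>P a)"
  define l1 where "l1 = (\<integral>y. y * lik hA (\<lambda>_. y) \<partial>P a)"
  have hA: "arms_ok K hA" unfolding hA_def using h by (rule arms_ok_filter)
  have split: "E h (\<lambda>mu. H mu * phi (mu a)) = (\<integral>x. H x * lik hB x \<partial>PiM ({..<K}-{a}) P') * (\<integral>y. phi y * lik hA (\<lambda>_. y) \<partial>P a)"
    if "H \<in> borel_measurable (prior K P)" "\<And>mu. box K mu \<Longrightarrow> \<bar>H mu\<bar> \<le> D" "\<And>mu y. H (mu(a:=y)) = H mu"
       "phi \<in> borel_measurable borel" "\<And>y. 0 \<le> y \<Longrightarrow> y \<le> 1 \<Longrightarrow> \<bar>phi y\<bar> \<le> 1" for H phi and D :: real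
    unfolding hA_def hB_def by (rule indep_split[OF a h that])
  define R1 where "R1 = (\<integral>x. lik hB x \<partial>PiM ({..<K}-{a}) P')"
  have e1': "E h (\<lambda>mu. 1 * 1) = (\<integral>x. 1 * lik hB x \<partial>PiM ({..<K}-{a}) P') * (\<integral>y. 1 * lik hA (\<lambda>_. y) \<partial>P a)"
    by (rule split[of "\<lambda>_. 1" 1 "\<lambda>_. 1"]) simp_all
  have e1: "E h (\<lambda>_. 1) = R1 * l"
    using e1' unfolding R1_def l_def by (simp only: mult_1)
  have e2': "E h (\<lambda>mu. 1 * mu a) = (\<integral>x. 1 * lik hB x \<partial>PiM ({..<K}-{a}) P') * (\<integral>y. y * lik hA (\<lambda>_. y) \<partial>P a)"
    by (rule split[of "\<lambda>_. 1" 1 "\<lambda>y. y"]) simp_all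
  have e2: "E h (\<lambda>mu. mu a) = R1 * l1"
    using e2' unfolding R1_def l1_def by (simp only: mult_1)
  have i1: "integrable (P a) (\<lambda>y. lik hA (\<lambda>_. y))"
    using int_Pa[OF a hA, of "\<lambda>_. 1"] by simp
  have i2: "integrable (P a) (\<lambda>y. y * lik hA (\<lambda>_. y))"
    using int_Pa[OF a hA, of "\<lambda>y. y"] by simp
  have l1_ge: "0 \<le> l1" unfolding l1_def
  proof (rule integral_nonneg_AE)
    show "AE y in P a. 0 \<le> y * lik hA (\<lambda>_. y)"
      using AE01[OF a]
    proof (rule eventually_mono)
      fix y :: real assume y: "0 \<le> y \<and> y \<le> 1"
      then have "0 \<le> lik hA (\<lambda>_. y)" using lik_bounds[OF box_const hA] by auto
      then show "0 \<le> y * lik hA (\<lambda>_. y)" using y by simp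
    qed
  qed
  have l1_le: "l1 \<le> l" unfolding l1_def l_def
  proof (rule integral_mono_AE[OF i2 i1])
    show "AE y in P a. y * lik hA (\<lambda>_. y) \<le> lik hA (\<lambda>_. y)"
      using AE01[OF a]
    proof (rule eventually_mono)
      fix y :: real assume y: "0 \<le> y \<and> y \<le> 1"
      then have "0 \<le> lik hA (\<lambda>_. y)" using lik_bounds[OF box_const hA] by auto
      then show "y * lik hA (\<lambda>_. y) \<le> lik hA (\<lambda>_. y)" using y by (simp add: mult_left_le_one_le)
    qed
  qed
  have E1: "0 \<le> E h (\<lambda>_. 1)" by (rule E_one_nonneg[OF h])
  show ?thesis
  proof (cases "l = 0")
    case True
    then have "l1 = 0" using l1_ge l1_le by simp
    then show ?thesis using e1 e2 True by simp
  next
    case False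
    then have lpos: "0 < l" using l1_ge l1_le by simp
    define m where "m = l1 / l"
    have m0: "0 \<le> m" using l1_ge lpos by (simp add: m_def)
    have m1: "m \<le> 1" using l1_le lpos by (simp add: m_def)
    define Hm where "Hm = (\<lambda>mu. F (mu(a := m)))"
    have Hm_meas: "Hm \<in> borel_measurable (prior K P)"
      unfolding Hm_def using measurable_compose[OF meas_upd[OF a] Fm] .
    have Hm_b: "\<bar>Hm mu\<bar> \<le> C" if "box K mu" for mu
      using Fb[OF box_upd[OF that m0 m1]] by (simp add: Hm_def)
    have Hm_inv: "Hm (mu(a:=y)) = Hm mu" for mu y by (simp add: Hm_def)
    define RH where "RH = (\<integral>x. Hm x * lik hB x \<partial>PiM ({..<K}-{a}) P')"
    have s1: "E h (\<lambda>mu. Hm mu * mu a) = RH * l1"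
      unfolding RH_def l1_def by (rule split[of Hm C "\<lambda>y. y", OF Hm_meas Hm_b Hm_inv]) simp_all
    have s0': "E h (\<lambda>mu. Hm mu * 1) = RH * (\<integral>y. 1 * lik hA (\<lambda>_. y) \<partial>P a)"
      unfolding RH_def by (rule split[of Hm C "\<lambda>_. 1", OF Hm_meas Hm_b Hm_inv]) simp_all
    have s0: "E h Hm = RH * l"
      using s0' unfolding l_def by (simp only: mult_1_right mult_1)
    have pw: "0 \<le> (F mu - Hm mu) * (mu a - m) * lik h mu" if b: "box K mu" for mu
    proof -
      have "0 \<le> lik h mu" using lik_bounds[OF b h] by simp
      moreover have "0 \<le> (F mu - Hm mu) * (mu a - m)"
      proof (cases "m \<le> mu a")
        case True
        have "Hm mu \<le> F (mu(a := mu a))" unfolding Hm_def by (rule Fmono[OF True])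
        then have "Hm mu \<le> F mu" by simp
        then show ?thesis using True by simp
      next
        case False
        have "F (mu(a := mu a)) \<le> Hm mu" unfolding Hm_def by (rule Fmono) (use False in simp)
        then have "F mu \<le> Hm mu" by simp
        then show ?thesis using False by (simp add: mult_nonpos_nonpos)
      qed
      ultimately show ?thesis by simp
    qed
    have bnd_a: "\<bar>mu a\<bar> \<le> 1" if "box K mu" for mu using that a by (auto simp: box_def)
    have ma[measurable]: "(\<lambda>mu. mu a) \<in> borel_measurable (prior K P)" using a by (rule meas_comp)
    have iF1: "integrable (prior K P) (\<lambda>mu. F mu * mu a * lik h mu)"
    proof (rule int_lik[OF _ _ h, where C=C])
      show "(\<lambda>mu. F mu * mu a) \<in> borel_measurable (prior K P)" using Fm by measurable
      fix mu assume b: "box K mu"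
      have "\<bar>F mu\<bar> * \<bar>mu a\<bar> \<le> C * 1" using Fb[OF b] bnd_a[OF b] by (intro mult_mono) auto
      then show "\<bar>F mu * mu a\<bar> \<le> C" by (simp add: abs_mult)
    qed
    have iF0: "integrable (prior K P) (\<lambda>mu. F mu * lik h mu)"
      by (rule int_lik[OF Fm Fb h])
    have iH1: "integrable (prior K P) (\<lambda>mu. Hm mu * mu a * lik h mu)"
    proof (rule int_lik[OF _ _ h, where C=C])
      show "(\<lambda>mu. Hm mu * mu a) \<in> borel_measurable (prior K P)" using Hm_meas by measurable
      fix mu assume b: "box K mu"
      have "\<bar>Hm mu\<bar> * \<bar>mu a\<bar> \<le> C * 1" using Hm_b[OF b] bnd_a[OF b] by (intro mult_mono) auto
      then show "\<bar>Hm mu * mu a\<bar> \<le> C" by (simp add: abs_mult)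
    qed
    have iH0: "integrable (prior K P) (\<lambda>mu. Hm mu * lik h mu)"
      by (rule int_lik[OF Hm_meas Hm_b h])
    have eqf: "(\<lambda>mu. (F mu - Hm mu) * (mu a - m) * lik h mu) =
      (\<lambda>mu. ((F mu * mu a * lik h mu - m * (F mu * lik h mu)) - Hm mu * mu a * lik h mu) + m * (Hm mu * lik h mu))"
      by (rule ext) (simp add: algebra_simps)
    have "(\<integral>mu. (F mu - Hm mu) * (mu a - m) * lik h mu \<partial>prior K P) =
      E h (\<lambda>mu. F mu * mu a) - m * E h F - E h (\<lambda>mu. Hm mu * mu a) + m * E h Hm"
    proof -
      have "(\<integral>mu. (F mu - Hm mu) * (mu a - m) * lik h mu \<partial>prior K P) =
        (\<integral>mu. ((F mu * mu a * lik h mu - m * (F mu * lik h mu)) - Hm mu * mu a * lik h mu) \<partial>prior K P)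
        + (\<integral>mu. m * (Hm mu * lik h mu) \<partial>prior K P)"
        unfolding eqf by (rule Bochner_Integration.integral_add[OF Bochner_Integration.integrable_diff[OF Bochner_Integration.integrable_diff[OF iF1 Bochner_Integration.integrable_mult_right[OF iF0]] iH1] Bochner_Integration.integrable_mult_right[OF iH0]])
      also have "(\<integral>mu. ((F mu * mu a * lik h mu - m * (F mu * lik h mu)) - Hm mu * mu a * lik h mu) \<partial>prior K P)
        = (\<integral>mu. (F mu * mu a * lik h mu - m * (F mu * lik h mu)) \<partial>prior K P) - (\<integral>mu. Hm mu * mu a * lik h mu \<partial>prior K P)"
        by (rule Bochner_Integration.integral_diff[OF Bochner_Integration.integrable_diff[OF iF1 Bochner_Integration.integrable_mult_right[OF iF0]] iH1])
      also have "(\<integral>mu. (F mu * mu a * lik h mu - m * (F mu * lik h mu)) \<partial>prior K P)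
        = (\<integral>mu. F mu * mu a * lik h mu \<partial>prior K P) - (\<integral>mu. m * (F mu * lik h mu) \<partial>prior K P)"
        by (rule Bochner_Integration.integral_diff[OF iF1 Bochner_Integration.integrable_mult_right[OF iF0]])
      finally show ?thesis unfolding E_def by (simp only: integral_mult_right_zero mult.assoc)
    qed
    moreover have "0 \<le> (\<integral>mu. (F mu - Hm mu) * (mu a - m) * lik h mu \<partial>prior K P)"
      by (rule integral_nonneg_AE) (use AE_box in \<open>auto elim!: eventually_mono intro: pw\<close>)
    moreover have "E h (\<lambda>mu. Hm mu * mu a) - m * E h Hm = 0"
      using s1 s0 lpos by (simp add: m_def)
    ultimately have key: "m * E h F \<le> E h (\<lambda>mu. F mu * mu a)" by linarith
    have R1: "0 \<le> R1" using E1 e1 lpos by (simp add: zero_le_mult_iff)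
    have "E h F * E h (\<lambda>mu. mu a) = (m * E h F) * (R1 * l)"
      using e2 lpos by (simp add: m_def)
    also have "\<dots> \<le> E h (\<lambda>mu. F mu * mu a) * (R1 * l)"
      using key R1 lpos by (intro mult_right_mono) auto
    also have "\<dots> = E h (\<lambda>mu. F mu * mu a) * E h (\<lambda>_. 1)" using e1 by simp
    finally show ?thesis .
  qed
qed

end


context ts
begin

lemma cov_dec:
  fixes C :: real
  assumes a: "a < K" and h: "arms_ok K h"
    and Fm: "F \<in> borel_measurable (prior K P)" and Fb: "\<And>mu. box K mu \<Longrightarrow> \<bar>F mu\<bar> \<le> C"
    and Fmono: "\<And>mu y y'. y \<le> y' \<Longrightarrow> F (mu(a:=y')) \<le> F (mu(a:=y))"
  shows "E h (\<lambda>mu. F mu * mu a) * E h (\<lambda>_. 1) \<le> E h F * E h (\<lambda>mu. mu a)"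
proof -
  have "E h (\<lambda>mu. - F mu) * E h (\<lambda>mu. mu a) \<le> E h (\<lambda>mu. - F mu * mu a) * E h (\<lambda>_. 1)"
  proof (rule cov_inc[OF a h, where C=C])
    show "(\<lambda>mu. - F mu) \<in> borel_measurable (prior K P)" using Fm by measurable
    show "\<bar>- F mu\<bar> \<le> C" if "box K mu" for mu using Fb[OF that] by simp
    show "- F (mu(a := y)) \<le> - F (mu(a := y'))" if "y \<le> y'" for mu y y' using Fmono[OF that] by simp
  qed
  moreover have "E h (\<lambda>mu. - F mu) = - E h F" unfolding E_def by simp
  moreover have "E h (\<lambda>mu. - F mu * mu a) = - E h (\<lambda>mu. F mu * mu a)" unfolding E_def by simp
  ultimately show ?thesis by simp
qed

definition bi :: "nat \<Rightarrow> (nat \<Rightarrow> real) \<Rightarrow> real" where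
  "bi i mu = (if best_arm K mu = i then 1 else 0)"

lemma bi_meas[measurable]: "bi i \<in> borel_measurable (prior K P)"
proof -
  have "{mu \<in> space (prior K P). best_arm K mu = i} \<in> sets (prior K P)"
    using measurable_sets[OF meas_best, of "{i}"] by (simp add: vimage_def Int_def conj_commute)
  then have "indicator {mu \<in> space (prior K P). best_arm K mu = i} \<in> borel_measurable (prior K P)"
    by (rule borel_measurable_indicator)
  moreover have "\<And>mu. mu \<in> space (prior K P) \<Longrightarrow> indicator {mu \<in> space (prior K P). best_arm K mu = i} mu = bi i mu"
    by (simp add: bi_def indicator_def)
  ultimately show ?thesis by (rule measurable_cong[THEN iffD1, rotated])
qed

lemma bi_bound: "\<bar>bi i mu\<bar> \<le> 1" by (simp add: bi_def)

lemma g_meas: "i < K \<Longrightarrow> j < K \<Longrightarrow> (\<lambda>mu. mu i - mu j) \<in> borel_measurable (prior K P)"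
  using meas_comp[of i] meas_comp[of j] by measurable

lemma g_bound: "i < K \<Longrightarrow> j < K \<Longrightarrow> box K mu \<Longrightarrow> \<bar>mu i - mu j\<bar> \<le> 1"
  by (auto simp: box_def abs_le_iff) (smt (verit))+

end


context ts
begin

lemma int_E:
  fixes C :: real
  assumes "f \<in> borel_measurable (prior K P)" "\<And>mu. box K mu \<Longrightarrow> \<bar>f mu\<bar> \<le> C" "arms_ok K h"
  shows "integrable (prior K P) (\<lambda>mu. f mu * lik h mu)"
  by (rule int_lik[OF assms])

lemma E_mono:
  fixes C D :: real
  assumes "f \<in> borel_measurable (prior K P)" "\<And>mu. box K mu \<Longrightarrow> \<bar>f mu\<bar> \<le> C"
    "g \<in> borel_measurable (prior K P)" "\<And>mu. box K mu \<Longrightarrow> \<bar>g mu\<bar> \<le> D"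
    and h: "arms_ok K h" and le: "\<And>mu. box K mu \<Longrightarrow> f mu \<le> g mu"
  shows "E h f \<le> E h g"
  unfolding E_def
proof (rule integral_mono_AE[OF int_E[OF assms(1,2) h] int_E[OF assms(3,4) h]])
  show "AE mu in prior K P. f mu * lik h mu \<le> g mu * lik h mu"
    using AE_box
  proof (rule eventually_mono)
    fix mu assume b: "box K mu"
    then have "0 \<le> lik h mu" using lik_bounds[OF b h] by simp
    then show "f mu * lik h mu \<le> g mu * lik h mu" using le[OF b] by (rule mult_right_mono[rotated])
  qed
qed

lemma E_bounds:
  assumes i: "i < K" and j: "j < K" and h: "arms_ok K h"
  shows "0 \<le> E h (bi i)" "E h (bi i) \<le> E h (\<lambda>_. 1)" "\<bar>E h (\<lambda>mu. mu i - mu j)\<bar> \<le> E h (\<lambda>_. 1)"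
proof -
  have c: "(\<lambda>_. 1::real) \<in> borel_measurable (prior K P)" "(\<lambda>_. 0::real) \<in> borel_measurable (prior K P)" by simp_all
  have "E h (\<lambda>_. 0) \<le> E h (bi i)"
    by (rule E_mono[OF c(2) _ bi_meas _ h, where C=0 and D=1]) (auto simp: bi_def)
  then show "0 \<le> E h (bi i)" by (simp add: E_def)
  show "E h (bi i) \<le> E h (\<lambda>_. 1)"
    by (rule E_mono[OF bi_meas _ c(1) _ h, where C=1 and D=1]) (auto simp: bi_def)
  have g: "(\<lambda>mu. mu i - mu j) \<in> borel_measurable (prior K P)" by (rule g_meas[OF i j])
  have g': "(\<lambda>mu. - (mu i - mu j)) \<in> borel_measurable (prior K P)" using g by measurable
  have "E h (\<lambda>mu. mu i - mu j) \<le> E h (\<lambda>_. 1)"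
    by (rule E_mono[OF g _ c(1) _ h, where C=1 and D=1]) (use g_bound[OF i j] in \<open>auto simp: abs_le_iff\<close>)
  moreover have "E h (\<lambda>mu. - (mu i - mu j)) \<le> E h (\<lambda>_. 1)"
    by (rule E_mono[OF g' _ c(1) _ h, where C=1 and D=1]) (use g_bound[OF i j] in \<open>auto simp: abs_le_iff\<close>)
  moreover have "E h (\<lambda>mu. - (mu i - mu j)) = - E h (\<lambda>mu. mu i - mu j)"
    unfolding E_def by (simp only: mult_minus_left integral_minus)
  ultimately show "\<bar>E h (\<lambda>mu. mu i - mu j)\<bar> \<le> E h (\<lambda>_. 1)" by simp
qed

lemma E_T: "E (h @ [(a, True)]) f = E h (\<lambda>mu. f mu * mu a)"
  unfolding E_def lik_snoc_T by (simp add: mult_ac)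

lemma arms_ok_snoc: "arms_ok K h \<Longrightarrow> a < K \<Longrightarrow> arms_ok K (h @ [(a, r)])"
  by (auto simp: arms_ok_def)

lemma E_sum:
  fixes C :: real
  assumes a: "a < K" and h: "arms_ok K h"
    and f: "f \<in> borel_measurable (prior K P)" "\<And>mu. box K mu \<Longrightarrow> \<bar>f mu\<bar> \<le> C"
  shows "E h f = E (h @ [(a, True)]) f + E (h @ [(a, False)]) f"
proof -
  have i1: "integrable (prior K P) (\<lambda>mu. f mu * lik (h @ [(a, True)]) mu)"
    by (rule int_E[OF f arms_ok_snoc[OF h a]])
  have i0: "integrable (prior K P) (\<lambda>mu. f mu * lik (h @ [(a, False)]) mu)"
    by (rule int_E[OF f arms_ok_snoc[OF h a]])
  have "E (h @ [(a, True)]) f + E (h @ [(a, False)]) f =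
     (\<integral>mu. f mu * lik (h @ [(a, True)]) mu + f mu * lik (h @ [(a, False)]) mu \<partial>prior K P)"
    unfolding E_def by (rule Bochner_Integration.integral_add[OF i1 i0, symmetric])
  also have "\<dots> = E h f"
    unfolding E_def lik_snoc_T lik_snoc_F by (simp add: algebra_simps)
  finally show ?thesis ..
qed

end


context ts
begin

lemma step_ineq:
  assumes i: "i < K" and j: "j < K" and a: "a < K" and h: "arms_ok K h" and zpos: "0 < E h (\<lambda>_. 1)"
  shows "E h (bi i) * E h (\<lambda>mu. mu i - mu j) / E h (\<lambda>_. 1) \<le>
    E (h @ [(a, True)]) (bi i) * E (h @ [(a, True)]) (\<lambda>mu. mu i - mu j) / E (h @ [(a, True)]) (\<lambda>_. 1) +
    E (h @ [(a, False)]) (bi i) * E (h @ [(a, False)]) (\<lambda>mu. mu i - mu j) / E (h @ [(a, False)]) (\<lambda>_. 1)"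
proof -
  define h1 where "h1 = h @ [(a, True)]"
  define h0 where "h0 = h @ [(a, False)]"
  have h1: "arms_ok K h1" and h0: "arms_ok K h0"
    unfolding h1_def h0_def using arms_ok_snoc[OF h a] by auto
  define z1 where "z1 = E h1 (\<lambda>_. 1)"
  define z0 where "z0 = E h0 (\<lambda>_. 1)"
  define B1 where "B1 = E h1 (bi i)"
  define B0 where "B0 = E h0 (bi i)"
  define G1 where "G1 = E h1 (\<lambda>mu. mu i - mu j)"
  define G0 where "G0 = E h0 (\<lambda>mu. mu i - mu j)"
  note b1 = E_bounds[OF i j h1, folded z1_def B1_def G1_def]
  note b0 = E_bounds[OF i j h0, folded z0_def B0_def G0_def]
  have c1: "(\<lambda>_. 1::real) \<in> borel_measurable (prior K P)" by simp
  have gm: "(\<lambda>mu. mu i - mu j) \<in> borel_measurable (prior K P)" by (rule g_meas[OF i j])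
  have sz: "E h (\<lambda>_. 1) = z1 + z0"
    unfolding z1_def z0_def h1_def h0_def by (rule E_sum[OF a h c1, where C=1]) simp
  have sB: "E h (bi i) = B1 + B0"
    unfolding B1_def B0_def h1_def h0_def by (rule E_sum[OF a h bi_meas bi_bound])
  have sG: "E h (\<lambda>mu. mu i - mu j) = G1 + G0"
    unfolding G1_def G0_def h1_def h0_def by (rule E_sum[OF a h gm g_bound[OF i j]])
  have ma: "E h (\<lambda>mu. mu a) = z1"
    unfolding z1_def h1_def E_T by simp
  have cinc: "E h F * z1 \<le> E h1 F * (z1 + z0)"
    if "F \<in> borel_measurable (prior K P)" "\<And>mu. box K mu \<Longrightarrow> \<bar>F mu\<bar> \<le> C"
      "\<And>mu y y'. y \<le> y' \<Longrightarrow> F (mu(a:=y)) \<le> F (mu(a:=y'))" for F and C :: real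
    using cov_inc[OF a h that] unfolding h1_def E_T sz[symmetric] ma .
  have cdec: "E h1 F * (z1 + z0) \<le> E h F * z1"
    if "F \<in> borel_measurable (prior K P)" "\<And>mu. box K mu \<Longrightarrow> \<bar>F mu\<bar> \<le> C"
      "\<And>mu y y'. y \<le> y' \<Longrightarrow> F (mu(a:=y')) \<le> F (mu(a:=y))" for F and C :: real
    using cov_dec[OF a h that] unfolding h1_def E_T sz[symmetric] ma .
  have cov: "0 \<le> (B1 * (z1 + z0) - (B1 + B0) * z1) * (G1 * (z1 + z0) - (G1 + G0) * z1)"
  proof (cases "i = j")
    case True
    then have "G1 = 0" "G0 = 0" unfolding G1_def G0_def E_def by simp_all
    then show ?thesis by simp
  next
    case ij: False
    show ?thesis
    proof (cases "a = i")
      case True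
      have "E h (bi i) * z1 \<le> E h1 (bi i) * (z1 + z0)"
      proof (rule cinc[OF bi_meas bi_bound])
        fix mu and y y' :: real assume "y \<le> y'"
        then show "bi i (mu(a := y)) \<le> bi i (mu(a := y'))"
          using best_mono_own[OF i, of y y' mu] True by (auto simp: bi_def)
      qed
      moreover have "E h (\<lambda>mu. mu i - mu j) * z1 \<le> E h1 (\<lambda>mu. mu i - mu j) * (z1 + z0)"
        by (rule cinc[OF gm g_bound[OF i j]]) (use True ij in auto)
      ultimately have "0 \<le> B1 * (z1 + z0) - (B1 + B0) * z1" "0 \<le> G1 * (z1 + z0) - (G1 + G0) * z1"
        using sB sG by (simp_all add: B1_def G1_def)
      then show ?thesis by simp
    next
      case ai: False
      show ?thesis
      proof (cases "a = j")
        case True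
        have "E h1 (bi i) * (z1 + z0) \<le> E h (bi i) * z1"
        proof (rule cdec[OF bi_meas bi_bound])
          fix mu and y y' :: real assume "y \<le> y'"
          then show "bi i (mu(a := y')) \<le> bi i (mu(a := y))"
            using best_mono_other[OF i, of j y y' mu] True ij by (auto simp: bi_def)
        qed
        moreover have "E h1 (\<lambda>mu. mu i - mu j) * (z1 + z0) \<le> E h (\<lambda>mu. mu i - mu j) * z1"
          by (rule cdec[OF gm g_bound[OF i j]]) (use True ij in auto)
        ultimately have "B1 * (z1 + z0) - (B1 + B0) * z1 \<le> 0" "G1 * (z1 + z0) - (G1 + G0) * z1 \<le> 0"
          using sB sG by (simp_all add: B1_def G1_def)
        then show ?thesis by (simp add: mult_nonpos_nonpos)
      next
        case aj: False
        have "E h (\<lambda>mu. mu i - mu j) * z1 \<le> E h1 (\<lambda>mu. mu i - mu j) * (z1 + z0)"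
          by (rule cinc[OF gm g_bound[OF i j]]) (use ai aj in auto)
        moreover have "E h1 (\<lambda>mu. mu i - mu j) * (z1 + z0) \<le> E h (\<lambda>mu. mu i - mu j) * z1"
          by (rule cdec[OF gm g_bound[OF i j]]) (use ai aj in auto)
        ultimately have "G1 * (z1 + z0) - (G1 + G0) * z1 = 0"
          using sG by (simp add: G1_def)
        then show ?thesis by simp
      qed
    qed
  qed
  have "(B1 + B0) * (G1 + G0) / (z1 + z0) \<le> B1 * G1 / z1 + B0 * G0 / z0"
    by (rule alg) (use b1 b0 cov zpos sz in auto)
  then show ?thesis
    unfolding sz sB sG unfolding z1_def z0_def B1_def B0_def G1_def G0_def h1_def h0_def .
qed

end


context ts
begin

lemma post_eq: "posterior_best K P h a = E h (bi a) / E h (\<lambda>_. 1)"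
proof -
  have "(\<lambda>mu. if best_arm K mu = a then lik h mu else 0) = (\<lambda>mu. bi a mu * lik h mu)"
    by (rule ext) (simp add: bi_def)
  then show ?thesis unfolding posterior_best_def E_def by simp
qed

lemma post_nonneg: "arms_ok K h \<Longrightarrow> 0 \<le> posterior_best K P h a"
proof -
  assume h: "arms_ok K h"
  have "E h (\<lambda>_. 0) \<le> E h (bi a)"
    by (rule E_mono[OF _ _ bi_meas _ h, where C=0 and D=1]) (auto simp: bi_def)
  then have "0 \<le> E h (bi a)" by (simp add: E_def)
  then show ?thesis unfolding post_eq using E_one_nonneg[OF h] by simp
qed

lemma post_sum:
  assumes K: "0 < K" and h: "arms_ok K h" and z: "0 < E h (\<lambda>_. 1)"
  shows "(\<Sum>a<K. posterior_best K P h a) = 1"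
proof -
  have "(\<Sum>a<K. E h (bi a)) = (\<integral>mu. (\<Sum>a<K. bi a mu * lik h mu) \<partial>prior K P)"
    unfolding E_def
    by (rule Bochner_Integration.integral_sum[symmetric]) (rule int_E[OF bi_meas bi_bound h])
  also have "\<dots> = E h (\<lambda>_. 1)"
    unfolding E_def
  proof (rule Bochner_Integration.integral_cong[OF refl])
    fix mu
    have "(\<Sum>a<K. bi a mu) = 1"
      unfolding bi_def using best_props(1)[OF K, of mu] by (simp add: sum.delta)
    then show "(\<Sum>a<K. bi a mu * lik h mu) = 1 * lik h mu"
      by (simp add: sum_distrib_right[symmetric])
  qed
  finally show ?thesis unfolding post_eq using z by (simp add: sum_divide_distrib[symmetric])
qed

definition Q :: "(nat \<times> bool) list \<Rightarrow> real" where
  "Q h = (\<Prod>s<length h. posterior_best K P (take s h) (fst (h ! s)))"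

lemma lik_nth: "lik h mu = (\<Prod>s<length h. reward_lik mu (h ! s))"
proof (induction h rule: rev_induct)
  case Nil then show ?case by simp
next
  case (snoc x h)
  have "(\<Prod>s<length h. reward_lik mu ((h @ [x]) ! s)) = (\<Prod>s<length h. reward_lik mu (h ! s))"
    by (rule prod.cong) (auto simp: nth_append)
  then show ?case using snoc by (simp add: lik_def)
qed

lemma hist_prob: "ts_hist_prob K P mu h = Q h * lik h mu"
  unfolding ts_hist_prob_def Q_def lik_nth prod.distrib ..

lemma Q_snoc: "Q (h @ [x]) = Q h * posterior_best K P h (fst x)"
proof -
  have "(\<Prod>s<length h. posterior_best K P (take s (h @ [x])) (fst ((h @ [x]) ! s))) =
        (\<Prod>s<length h. posterior_best K P (take s h) (fst (h ! s)))"
    by (rule prod.cong) (auto simp: nth_append)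
  then show ?thesis unfolding Q_def by simp
qed

lemma Q_nonneg: "arms_ok K h \<Longrightarrow> 0 \<le> Q h"
  unfolding Q_def
proof (rule prod_nonneg)
  fix s assume h: "arms_ok K h"
  have "arms_ok K (take s h)" using h set_take_subset[of s h] by (auto simp: arms_ok_def)
  then show "0 \<le> posterior_best K P (take s h) (fst (h ! s))" by (rule post_nonneg)
qed

lemma fin_hist: "finite (histories K n)"
proof -
  have "histories K n \<subseteq> {xs. set xs \<subseteq> {..<K} \<times> UNIV \<and> length xs = n}"
    by (auto simp: histories_def)
  moreover have "finite {xs. set xs \<subseteq> {..<K} \<times> (UNIV :: bool set) \<and> length xs = n}"
    by (rule finite_lists_length_eq) simp
  ultimately show ?thesis by (rule finite_subset)
qed

lemma hist_ok: "h \<in> histories K n \<Longrightarrow> arms_ok K h"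
  by (simp add: histories_def arms_ok_def)

lemma N_eq:
  assumes i: "i < K" and j: "j < K"
  shows "(\<integral>mu. (mu i - mu j) * ts_rec_prob K P mu n i \<partial>prior K P) =
    (\<Sum>h\<in>histories K n. Q h * posterior_best K P h i * E h (\<lambda>mu. mu i - mu j))"
proof -
  have "(\<lambda>mu. (mu i - mu j) * ts_rec_prob K P mu n i) =
    (\<lambda>mu. \<Sum>h\<in>histories K n. (Q h * posterior_best K P h i) * ((mu i - mu j) * lik h mu))"
    unfolding ts_rec_prob_def hist_prob by (rule ext) (simp add: sum_distrib_left mult_ac)
  then have "(\<integral>mu. (mu i - mu j) * ts_rec_prob K P mu n i \<partial>prior K P) =
     (\<Sum>h\<in>histories K n. (\<integral>mu. (Q h * posterior_best K P h i) * ((mu i - mu j) * lik h mu) \<partial>prior K P))"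
    by (simp only: Bochner_Integration.integral_sum[OF Bochner_Integration.integrable_mult_right[OF
          int_E[OF g_meas[OF i j] g_bound[OF i j] hist_ok]]])
  also have "\<dots> = (\<Sum>h\<in>histories K n. Q h * posterior_best K P h i * E h (\<lambda>mu. mu i - mu j))"
    unfolding E_def by simp
  finally show ?thesis .
qed

end


context ts
begin

lemma hist_Suc: "histories K (Suc n) = (\<lambda>(h, x). h @ [x]) ` (histories K n \<times> ({..<K} \<times> UNIV))"
proof
  show "histories K (Suc n) \<subseteq> (\<lambda>(h, x). h @ [x]) ` (histories K n \<times> ({..<K} \<times> UNIV))"
  proof
    fix h' assume h': "h' \<in> histories K (Suc n)"
    then obtain x h where "h' = h @ [x]" "length h = n"
      by (auto simp: histories_def length_Suc_conv_rev)
    then show "h' \<in> (\<lambda>(h, x). h @ [x]) ` (histories K n \<times> ({..<K} \<times> UNIV))"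
      using h' by (auto simp: histories_def image_iff mem_Times_iff intro!: bexI[of _ "(h, x)"])
  qed
  show "(\<lambda>(h, x). h @ [x]) ` (histories K n \<times> ({..<K} \<times> UNIV)) \<subseteq> histories K (Suc n)"
    by (auto simp: histories_def)
qed

lemma sum_snoc:
  "(\<Sum>h'\<in>histories K (Suc n). f h') =
   (\<Sum>h\<in>histories K n. \<Sum>a<K. f (h @ [(a, True)]) + f (h @ [(a, False)]))"
proof -
  have inj: "inj_on (\<lambda>(h, x). h @ [x]) (histories K n \<times> ({..<K} \<times> (UNIV :: bool set)))"
    by (auto simp: inj_on_def)
  have "(\<Sum>h'\<in>histories K (Suc n). f h') = (\<Sum>p\<in>histories K n \<times> ({..<K} \<times> UNIV). f (fst p @ [snd p]))"
    unfolding hist_Suc by (subst sum.reindex[OF inj]) (simp add: case_prod_beta)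
  also have "\<dots> = (\<Sum>h\<in>histories K n. \<Sum>x\<in>{..<K} \<times> UNIV. f (h @ [x]))"
    by (simp only: sum.cartesian_product split_def)
  also have "\<dots> = (\<Sum>h\<in>histories K n. \<Sum>a<K. f (h @ [(a, True)]) + f (h @ [(a, False)]))"
  proof (rule sum.cong[OF refl])
    fix h
    have "(\<Sum>x\<in>{..<K} \<times> UNIV. f (h @ [x])) = (\<Sum>a<K. \<Sum>r\<in>UNIV. f (h @ [(a, r)]))"
      by (simp only: sum.cartesian_product split_def prod.collapse)
    also have "\<dots> = (\<Sum>a<K. f (h @ [(a, True)]) + f (h @ [(a, False)]))"
      by (simp add: UNIV_bool ac_simps)
    finally show "(\<Sum>x\<in>{..<K} \<times> UNIV. f (h @ [x])) = (\<Sum>a<K. f (h @ [(a, True)]) + f (h @ [(a, False)]))" .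
  qed
  finally show ?thesis .
qed

definition D :: "nat \<Rightarrow> nat \<Rightarrow> (nat \<times> bool) list \<Rightarrow> real" where
  "D i j h = Q h * posterior_best K P h i * E h (\<lambda>mu. mu i - mu j)"

lemma step_h:
  assumes i: "i < K" and j: "j < K" and h: "arms_ok K h"
  shows "D i j h \<le> (\<Sum>a<K. D i j (h @ [(a, True)]) + D i j (h @ [(a, False)]))"
proof (cases "E h (\<lambda>_. 1) = 0")
  case True
  then show ?thesis unfolding D_def Q_snoc by (simp add: post_eq)
next
  case False
  then have z: "0 < E h (\<lambda>_. 1)" using E_one_nonneg[OF h] by simp
  define Y where "Y = posterior_best K P h i * E h (\<lambda>mu. mu i - mu j)"
  define X where "X a = posterior_best K P (h @ [(a, True)]) i * E (h @ [(a, True)]) (\<lambda>mu. mu i - mu j) +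
     posterior_best K P (h @ [(a, False)]) i * E (h @ [(a, False)]) (\<lambda>mu. mu i - mu j)" for a
  have XY: "Y \<le> X a" if a: "a < K" for a
    using step_ineq[OF i j a h z] unfolding X_def Y_def post_eq by simp
  have "(\<Sum>a<K. D i j (h @ [(a, True)]) + D i j (h @ [(a, False)])) =
      Q h * (\<Sum>a<K. posterior_best K P h a * X a)"
    unfolding D_def Q_snoc X_def by (simp add: sum_distrib_left algebra_simps)
  also have "(\<Sum>a<K. posterior_best K P h a * X a) \<ge> (\<Sum>a<K. posterior_best K P h a * Y)"
    by (rule sum_mono) (use XY post_nonneg[OF h] in \<open>auto intro: mult_left_mono\<close>)
  then have "Q h * (\<Sum>a<K. posterior_best K P h a * X a) \<ge> Q h * (\<Sum>a<K. posterior_best K P h a * Y)"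
    using Q_nonneg[OF h] by (rule mult_left_mono)
  also have "(\<Sum>a<K. posterior_best K P h a * Y) = Y"
    using post_sum[OF _ h z] i by (simp add: sum_distrib_right[symmetric])
  finally show ?thesis unfolding D_def Y_def by (simp add: mult.assoc)
qed

lemma D_mono:
  assumes i: "i < K" and j: "j < K"
  shows "(\<Sum>h\<in>histories K n. D i j h) \<le> (\<Sum>h\<in>histories K (Suc n). D i j h)"
  unfolding sum_snoc by (rule sum_mono) (rule step_h[OF i j hist_ok])

lemma mean_comp:
  assumes i: "i < K"
  shows "(\<integral>mu. mu i \<partial>prior K P) = (\<integral>x. x \<partial>P i)"
proof -
  have "(\<integral>x. x \<partial>P' i) = (\<integral>x. x \<partial>distr (PiM {..<K} P') (P' i) (\<lambda>w. w i))"
    by (subst distr_PiM_component) (use prob' i in auto)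
  also have "\<dots> = (\<integral>mu. mu i \<partial>PiM {..<K} P')"
  proof (rule integral_distr)
    show "(\<lambda>w. w i) \<in> measurable (PiM {..<K} P') (P' i)" using i by simp
    show "(\<lambda>x. x) \<in> borel_measurable (P' i)"
      using measurable_ident_sets[OF sets'[of i]] by simp
  qed
  finally show ?thesis using i by (simp add: prior_eq P'_def)
qed

lemma D0:
  assumes i: "i < K" and j: "j < K" and means: "(\<integral>x. x \<partial>P i) = (\<integral>x. x \<partial>P j)"
  shows "(\<Sum>h\<in>histories K 0. D i j h) = 0"
proof -
  have hz: "histories K 0 = {[]}" by (auto simp: histories_def)
  have ii: "integrable (prior K P) (\<lambda>mu. mu k)" if "k < K" for k
    by (rule int_bdd[where C=1]) (use that in \<open>auto simp: box_def\<close>)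
  have "E [] (\<lambda>mu. mu i - mu j) = (\<integral>mu. mu i \<partial>prior K P) - (\<integral>mu. mu j \<partial>prior K P)"
    unfolding E_def by (simp add: Bochner_Integration.integral_diff[OF ii[OF i] ii[OF j]])
  also have "\<dots> = 0" using means by (simp add: mean_comp[OF i] mean_comp[OF j])
  finally show ?thesis unfolding hz D_def by simp
qed

lemma D_nonneg:
  assumes i: "i < K" and j: "j < K" and means: "(\<integral>x. x \<partial>P i) = (\<integral>x. x \<partial>P j)"
  shows "0 \<le> (\<Sum>h\<in>histories K n. D i j h)"
proof (induction n)
  case 0 then show ?case using D0[OF i j means] by simp
next
  case (Suc n) then show ?case using D_mono[OF i j, of n] by linarith
qed

end

theorem theorem3p5:
  fixes K :: nat and P :: "nat \<Rightarrow> real measure"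
  assumes "\<And>i. i < K \<Longrightarrow> prob_space (P i)"
    and "\<And>i. i < K \<Longrightarrow> sets (P i) = sets borel"
    and "\<And>i. i < K \<Longrightarrow> (AE x in P i. 0 \<le> x \<and> x \<le> 1)"
    and "\<And>i j. i < K \<Longrightarrow> j < K \<Longrightarrow> (\<integral>x. x \<partial>P i) = (\<integral>x. x \<partial>P j)"
  shows "TS_BIC K P"
proof -
  interpret ts K P by (rule ts.intro) (fact assms)+
  show ?thesis unfolding TS_BIC_def
  proof (intro allI impI)
    fix n i j assume i: "i < K" and j: "j < K" and pos: "0 < rec_prob K P n i"
    have "0 \<le> (\<integral>mu. (mu i - mu j) * ts_rec_prob K P mu n i \<partial>prior K P)"
      using D_nonneg[OF i j assms(4)[OF i j], of n] unfolding N_eq[OF i j] D_def .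
    then show "0 \<le> cond_gain K P n i j"
      unfolding cond_gain_def using pos by simp
  qed
qed


end
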